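(* Consider a convex $n$-gon with vertices $0,\dots,n-1$ in cyclic order, integers $0<a<b<c<n-1$, and $V_R=\{0,\dots,a-1\}$, $V_B=\{a,\dots,b-1\}$, $V_L=\{b,\dots,c-1\}$, $V_T=\{c,\dots,n-1\}$, with $|V_L|\ge3$, $|V_R|\ge 3$, $|V_T|\ge 2$, $|V_B|\ge2$. Let $B_Q$ be the set of all edges joining a vertex of $V_R$ to a vertex of $V_L$ together with all edges joining a vertex of $V_T$ to a vertex of $V_B$. Let $B_T$ be a saturated blocker for triangulations of the convex polygon with vertex set $V_T\cup\{0,c-1\}$, and $B_B$ a saturated blocker for triangulations of the convex polygon with vertex set $V_B\cup\{a-1,b\}$. Then $B_M=\big(B_Q\setminus\{(0,c-1),(a-1,b)\}\big)\cup B_T\cup B_B$ is a saturated blocker for triangulations of the $n$-gon, of size $|V_T||V_B|+|V_L||V_R|+|B_T|+|B_B|-2$.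
   Context: An edge $(i,j)$ is the segment between vertices $i,j$; boundary edges of a convex polygon join cyclically consecutive vertices, diagonals are the other edges. Two edges cross if they share an interior point. A triangulation of a convex polygon is a maximal set of pairwise non-crossing diagonals of it. A blocker is a set $B$ of diagonals having a diagonal in common with every triangulation; it is saturated if for every $e\in B$, $B\setminus\{e\}$ is not a blocker. *)

theory Defs
  imports Main
begin

text \<open>Vertices of a convex polygon are natural numbers; a convex polygon is given by
its finite vertex set S, the cyclic order being the natural order of S.
An edge (i,j) is represented as the pair with i < j.\<close>

definition edge_cross :: "nat \<times> nat \<Rightarrow> nat \<times> nat \<Rightarrow> bool" where
  "edge_cross e f \<longleftrightarrow>
     (fst e < fst f \<and> fst f < snd e \<and> snd e < snd f) \<or>
     (fst f < fst e \<and> fst e < snd f \<and> snd f < snd e)"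

text \<open>Diagonals: edges between vertices of S that are not cyclically consecutive in S,
i.e. some vertex of S lies strictly between them and some vertex of S lies outside.\<close>
definition diagonals :: "nat set \<Rightarrow> (nat \<times> nat) set" where
  "diagonals S = {(i, j). i \<in> S \<and> j \<in> S \<and> i < j \<and>
                   (\<exists>k\<in>S. i < k \<and> k < j) \<and> (\<exists>k\<in>S. k < i \<or> j < k)}"

definition noncrossing :: "(nat \<times> nat) set \<Rightarrow> bool" where
  "noncrossing T \<longleftrightarrow> (\<forall>e\<in>T. \<forall>f\<in>T. \<not> edge_cross e f)"

definition triangulation :: "nat set \<Rightarrow> (nat \<times> nat) set \<Rightarrow> bool" where
  "triangulation S T \<longleftrightarrow> T \<subseteq> diagonals S \<and> noncrossing T \<and>
     (\<forall>T'. T \<subseteq> T' \<and> T' \<subseteq> diagonals S \<and> noncrossing T' \<longrightarrow> T' = T)"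

definition blocker :: "nat set \<Rightarrow> (nat \<times> nat) set \<Rightarrow> bool" where
  "blocker S B \<longleftrightarrow> B \<subseteq> diagonals S \<and> (\<forall>T. triangulation S T \<longrightarrow> B \<inter> T \<noteq> {})"

definition saturated_blocker :: "nat set \<Rightarrow> (nat \<times> nat) set \<Rightarrow> bool" where
  "saturated_blocker S B \<longleftrightarrow> blocker S B \<and> (\<forall>e\<in>B. \<not> blocker S (B - {e}))"

end

theory Submission
  imports Defs
begin

lemma cross_sym: "edge_cross e f = edge_cross f e"
  unfolding edge_cross_def by auto

lemma cross_pair: "edge_cross (x,y) (u,w) \<longleftrightarrow> (x < u \<and> u < y \<and> y < w) \<or> (u < x \<and> x < w \<and> w < y)"
  unfolding edge_cross_def by simp

lemma diag_mem: "(x,y) \<in> diagonals S \<longleftrightarrow> x\<in>S \<and> y\<in>S \<and> x<y \<and> (\<exists>k\<in>S. x<k \<and> k<y) \<and> (\<exists>k\<in>S. k<x \<or> y<k)"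
  by (simp add: diagonals_def)

lemma diag_mono: "S \<subseteq> S' \<Longrightarrow> diagonals S \<subseteq> diagonals S'"
  unfolding diagonals_def by blast

lemma triangulation_iff: "triangulation S T \<longleftrightarrow> T \<subseteq> diagonals S \<and> noncrossing T \<and>
   (\<forall>f\<in>diagonals S. (\<forall>e\<in>T. \<not> edge_cross e f) \<longrightarrow> f \<in> T)"
proof
  assume H: "triangulation S T"
  show "T \<subseteq> diagonals S \<and> noncrossing T \<and> (\<forall>f\<in>diagonals S. (\<forall>e\<in>T. \<not> edge_cross e f) \<longrightarrow> f \<in> T)"
  proof (intro conjI ballI impI)
    fix f assume f: "f \<in> diagonals S" "\<forall>e\<in>T. \<not> edge_cross e f"
    have "noncrossing (insert f T)" using H f unfolding triangulation_def noncrossing_def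
      by (auto simp: cross_sym edge_cross_def)
    moreover have "insert f T \<subseteq> diagonals S" using H f unfolding triangulation_def by auto
    ultimately have "insert f T = T" using H unfolding triangulation_def by blast
    then show "f \<in> T" by blast
  qed (use H in \<open>auto simp: triangulation_def\<close>)
next
  assume H: "T \<subseteq> diagonals S \<and> noncrossing T \<and> (\<forall>f\<in>diagonals S. (\<forall>e\<in>T. \<not> edge_cross e f) \<longrightarrow> f \<in> T)"
  show "triangulation S T" unfolding triangulation_def
  proof (intro conjI allI impI)
    fix T' assume T': "T \<subseteq> T' \<and> T' \<subseteq> diagonals S \<and> noncrossing T'"
    show "T' = T"
    proof
      show "T' \<subseteq> T"
      proof
        fix f assume "f \<in> T'"
        then show "f \<in> T" using H T' unfolding noncrossing_def by blast
      qed
    qed (use T' in auto)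
  qed (use H in auto)
qed

definition fan :: "nat set \<Rightarrow> nat \<Rightarrow> (nat \<times> nat) set" where
  "fan S v = {e \<in> diagonals S. fst e = v \<or> snd e = v}"

lemma fan_mem: "(x,y) \<in> fan S v \<Longrightarrow> x \<in> S \<and> y \<in> S \<and> x < y \<and> (x = v \<or> y = v)"
  unfolding fan_def diagonals_def by auto

lemma fan_tri:
  assumes v: "v \<in> S"
  shows "triangulation S (fan S v)"
  unfolding triangulation_iff
proof (intro conjI ballI impI)
  show "fan S v \<subseteq> diagonals S" unfolding fan_def by auto
  show "noncrossing (fan S v)" unfolding noncrossing_def fan_def edge_cross_def
    by (auto simp: diagonals_def)
  fix f assume f: "f \<in> diagonals S" and nc: "\<forall>e\<in>fan S v. \<not> edge_cross e f"
  obtain x y where xy: "f = (x,y)" by (cases f)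
  have d: "x\<in>S" "y\<in>S" "x<y" and z1: "\<exists>k\<in>S. x<k \<and> k<y" and z2: "\<exists>k\<in>S. k<x \<or> y<k"
    using f xy by (auto simp: diag_mem)
  show "f \<in> fan S v"
  proof (rule ccontr)
    assume nf: "f \<notin> fan S v"
    then have nv: "x \<noteq> v" "y \<noteq> v" using f xy unfolding fan_def by auto
    consider "x < v \<and> v < y" | "v < x" | "y < v" using nv by linarith
    then show False
    proof cases
      case 1
      from z2 obtain z where z: "z \<in> S" "z < x \<or> y < z" by blast
      show False
      proof (cases "z < x")
        case True
        have "(z,v) \<in> fan S v" unfolding fan_def using 1 True z d v by (auto simp: diag_mem)
        moreover have "edge_cross (z,v) f" using 1 True xy by (auto simp: cross_pair)
        ultimately show False using nc by blast
      next
        case False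
        then have "y < z" using z by auto
        have "(v,z) \<in> fan S v" unfolding fan_def using 1 \<open>y<z\<close> z d v by (auto simp: diag_mem)
        moreover have "edge_cross (v,z) f" using 1 \<open>y<z\<close> xy by (auto simp: cross_pair)
        ultimately show False using nc by blast
      qed
    next
      case 2
      from z1 obtain z where z: "z \<in> S" "x<z" "z<y" by blast
      have "(v,z) \<in> fan S v" unfolding fan_def using 2 z d v by (auto simp: diag_mem)
      moreover have "edge_cross (v,z) f" using 2 z xy by (auto simp: cross_pair)
      ultimately show False using nc by blast
    next
      case 3
      from z1 obtain z where z: "z \<in> S" "x<z" "z<y" by blast
      have "(z,v) \<in> fan S v" unfolding fan_def using 3 z d v by (auto simp: diag_mem)
      moreover have "edge_cross (z,v) f" using 3 z xy by (auto simp: cross_pair)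
      ultimately show False using nc by blast
    qed
  qed
qed

lemma diag_inner:
  assumes "(x,y) \<in> diagonals S" "p \<le> x" "y \<le> q" "(x,y) \<noteq> (p,q)" "p \<in> S" "q \<in> S"
  shows "(x,y) \<in> diagonals (S \<inter> {p..q})"
proof -
  from assms(1) obtain k where k: "k\<in>S" "x<k" "k<y" by (auto simp: diag_mem)
  have "p \<le> q" using assms k by auto
  have o: "\<exists>k\<in>S \<inter> {p..q}. k<x \<or> y<k"
  proof (cases "p < x")
    case True then show ?thesis using assms \<open>p \<le> q\<close> by (intro bexI[of _ p]) auto
  next
    case False then have "x = p" using assms by auto
    then have "y < q" using assms by auto
    moreover have "p \<le> q" using assms by (auto simp: diag_mem)
    ultimately show ?thesis using assms by (intro bexI[of _ q]) auto
  qed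
  show ?thesis using assms k o by (auto simp: diag_mem)
qed

lemma diag_outer:
  assumes "(x,y) \<in> diagonals S" "x \<notin> {p<..<q}" "y \<notin> {p<..<q}" "(x,y) \<noteq> (p,q)" "p \<in> S" "q \<in> S" "p < q"
  shows "(x,y) \<in> diagonals (S - {p<..<q})"
proof -
  from assms(1) obtain k where k: "k\<in>S" "x<k" "k<y" by (auto simp: diag_mem)
  from assms(1) obtain k' where k': "k'\<in>S" "k'<x \<or> y<k'" by (auto simp: diag_mem)
  have b: "\<exists>k\<in>S - {p<..<q}. x<k \<and> k<y"
  proof (cases "k \<in> {p<..<q}")
    case False then show ?thesis using k by auto
  next
    case True
    then have "x \<le> p" "q \<le> y" using assms k by auto
    then show ?thesis using assms by (cases "x < p") auto
  qed
  have o: "\<exists>k\<in>S - {p<..<q}. k<x \<or> y<k"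
  proof (cases "k' \<in> {p<..<q}")
    case False then show ?thesis using k' by auto
  next
    case True
    show ?thesis
    proof (cases "k' < x")
      case True
      then have "p < x" using \<open>k' \<in> {p<..<q}\<close> by auto
      then show ?thesis using assms by (intro bexI[of _ p]) auto
    next
      case False
      then have "y < k'" using k' by auto
      then have "y < q" using \<open>k' \<in> {p<..<q}\<close> by auto
      then show ?thesis using assms by (intro bexI[of _ q]) auto
    qed
  qed
  show ?thesis using assms b o by (auto simp: diag_mem)
qed

lemma nocross_io:
  assumes "p \<le> x" "y \<le> q" "u \<notin> {p<..<q}" "w \<notin> {p<..<q}"
  shows "\<not> edge_cross (x,y) (u,w) \<and> \<not> edge_cross (u,w) (x,y)"
  using assms by (auto simp: cross_pair)

lemma noncross_side:
  assumes "\<not> edge_cross (x,y) (p,q)" "x < y"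
  shows "(p \<le> x \<and> y \<le> q) \<or> (x \<notin> {p<..<q} \<and> y \<notin> {p<..<q})"
  using assms by (auto simp: cross_pair)

lemma diag_lt: "e \<in> diagonals S \<Longrightarrow> fst e < snd e"
  unfolding diagonals_def by auto

lemma glue:
  assumes pq: "(p,q) \<in> diagonals S"
    and T1: "triangulation (S \<inter> {p..q}) T1"
    and T2: "triangulation (S - {p<..<q}) T2"
  shows "triangulation S (insert (p,q) (T1 \<union> T2))"
  unfolding triangulation_iff
proof (intro conjI ballI impI)
  have pqS: "p \<in> S" "q \<in> S" "p < q" using pq by (auto simp: diag_mem)
  have D1: "T1 \<subseteq> diagonals (S \<inter> {p..q})" and N1: "noncrossing T1"
    and M1: "\<forall>f\<in>diagonals (S \<inter> {p..q}). (\<forall>e\<in>T1. \<not> edge_cross e f) \<longrightarrow> f \<in> T1"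
    using T1 unfolding triangulation_iff by auto
  have D2: "T2 \<subseteq> diagonals (S - {p<..<q})" and N2: "noncrossing T2"
    and M2: "\<forall>f\<in>diagonals (S - {p<..<q}). (\<forall>e\<in>T2. \<not> edge_cross e f) \<longrightarrow> f \<in> T2"
    using T2 unfolding triangulation_iff by auto
  have I1: "p \<le> x \<and> y \<le> q \<and> x < y" if "(x,y) \<in> T1" for x y
    using D1 that by (auto simp: diag_mem)
  have I2: "x \<notin> {p<..<q} \<and> y \<notin> {p<..<q} \<and> x < y" if "(x,y) \<in> T2" for x y
    using D2 that by (auto simp: diag_mem)
  show "insert (p,q) (T1 \<union> T2) \<subseteq> diagonals S"
    using D1 D2 pq diag_mono[of "S \<inter> {p..q}" S] diag_mono[of "S - {p<..<q}" S] by auto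
  show "noncrossing (insert (p,q) (T1 \<union> T2))"
    unfolding noncrossing_def
  proof (intro ballI)
    fix e f assume e: "e \<in> insert (p,q) (T1 \<union> T2)" and f: "f \<in> insert (p,q) (T1 \<union> T2)"
    obtain x y where exy: "e = (x,y)" by (cases e)
    obtain u w where fuw: "f = (u,w)" by (cases f)
    have c1: "\<not> edge_cross e f" if "e \<in> T1" "f \<in> T1" using N1 that unfolding noncrossing_def by blast
    have c2: "\<not> edge_cross e f" if "e \<in> T2" "f \<in> T2" using N2 that unfolding noncrossing_def by blast
    show "\<not> edge_cross e f"
      using e f c1 c2 I1[of x y] I2[of x y] I1[of u w] I2[of u w] pqS
        nocross_io[of p x y q u w] nocross_io[of p u w q x y]
      unfolding exy fuw noncrossing_def
      by (auto simp: cross_pair)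
  qed
  fix f assume f: "f \<in> diagonals S" and nc: "\<forall>e\<in>insert (p,q) (T1 \<union> T2). \<not> edge_cross e f"
  obtain x y where fxy: "f = (x,y)" by (cases f)
  have xy: "x < y" using f fxy by (auto simp: diag_mem)
  have "\<not> edge_cross (x,y) (p,q)" using nc fxy cross_sym by blast
  then have side: "(p \<le> x \<and> y \<le> q) \<or> (x \<notin> {p<..<q} \<and> y \<notin> {p<..<q})"
    using noncross_side xy by blast
  show "f \<in> insert (p,q) (T1 \<union> T2)"
  proof (cases "f = (p,q)")
    case True then show ?thesis by simp
  next
    case False
    show ?thesis
    proof (cases "p \<le> x \<and> y \<le> q")
      case True
      have "f \<in> diagonals (S \<inter> {p..q})" using diag_inner[of x y S p q] f fxy True False pqS by auto
      then have "f \<in> T1" using M1 nc by auto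
      then show ?thesis by auto
    next
      case nin: False
      then have "x \<notin> {p<..<q} \<and> y \<notin> {p<..<q}" using side by auto
      then have "f \<in> diagonals (S - {p<..<q})" using diag_outer[of x y S p q] f fxy False pqS by auto
      then have "f \<in> T2" using M2 nc by auto
      then show ?thesis by auto
    qed
  qed
qed

lemma restrict:
  assumes T: "triangulation S T" and pq: "(p,q) \<in> T"
  shows "triangulation (S \<inter> {p..q}) (T \<inter> diagonals (S \<inter> {p..q}))"
    and "triangulation (S - {p<..<q}) (T \<inter> diagonals (S - {p<..<q}))"
proof -
  have D: "T \<subseteq> diagonals S" and N: "noncrossing T"
    and M: "\<forall>f\<in>diagonals S. (\<forall>e\<in>T. \<not> edge_cross e f) \<longrightarrow> f \<in> T"
    using T unfolding triangulation_iff by auto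
  have pqS: "p \<in> S" "q \<in> S" "p < q" using pq D by (auto simp: diag_mem)
  have side: "(p \<le> u \<and> w \<le> q) \<or> (u \<notin> {p<..<q} \<and> w \<notin> {p<..<q})" "u < w" if "(u,w) \<in> T" for u w
  proof -
    have "\<not> edge_cross (u,w) (p,q)" using N that pq unfolding noncrossing_def by blast
    moreover show "u < w" using D that by (auto simp: diag_mem)
    ultimately show "(p \<le> u \<and> w \<le> q) \<or> (u \<notin> {p<..<q} \<and> w \<notin> {p<..<q})" using noncross_side by blast
  qed
  show "triangulation (S \<inter> {p..q}) (T \<inter> diagonals (S \<inter> {p..q}))"
    unfolding triangulation_iff
  proof (intro conjI ballI impI)
    show "noncrossing (T \<inter> diagonals (S \<inter> {p..q}))" using N unfolding noncrossing_def by blast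
    fix f assume f: "f \<in> diagonals (S \<inter> {p..q})" and nc: "\<forall>e\<in>T \<inter> diagonals (S \<inter> {p..q}). \<not> edge_cross e f"
    obtain x y where fxy: "f = (x,y)" by (cases f)
    have fi: "p \<le> x" "y \<le> q" using f fxy by (auto simp: diag_mem)
    have "\<not> edge_cross e f" if e: "e \<in> T" for e
    proof -
      obtain u w where euw: "e = (u,w)" by (cases e)
      show ?thesis
      proof (cases "(p \<le> u \<and> w \<le> q) \<and> e \<noteq> (p,q)")
        case True
        then have "e \<in> diagonals (S \<inter> {p..q})" using diag_inner[of u w S p q] D e euw pqS by auto
        then show ?thesis using nc e by auto
      next
        case False
        then have "u \<notin> {p<..<q} \<and> w \<notin> {p<..<q}" using side[of u w] e euw by auto
        then show ?thesis using nocross_io[of p x y q u w] fi euw fxy by auto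
      qed
    qed
    moreover have "f \<in> diagonals S" using f diag_mono[of "S \<inter> {p..q}" S] by auto
    ultimately show "f \<in> T \<inter> diagonals (S \<inter> {p..q})" using M f by auto
  qed auto
  show "triangulation (S - {p<..<q}) (T \<inter> diagonals (S - {p<..<q}))"
    unfolding triangulation_iff
  proof (intro conjI ballI impI)
    show "noncrossing (T \<inter> diagonals (S - {p<..<q}))" using N unfolding noncrossing_def by blast
    fix f assume f: "f \<in> diagonals (S - {p<..<q})" and nc: "\<forall>e\<in>T \<inter> diagonals (S - {p<..<q}). \<not> edge_cross e f"
    obtain x y where fxy: "f = (x,y)" by (cases f)
    have fi: "x \<notin> {p<..<q}" "y \<notin> {p<..<q}" using f fxy by (auto simp: diag_mem)
    have "\<not> edge_cross e f" if e: "e \<in> T" for e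
    proof -
      obtain u w where euw: "e = (u,w)" by (cases e)
      show ?thesis
      proof (cases "(u \<notin> {p<..<q} \<and> w \<notin> {p<..<q}) \<and> e \<noteq> (p,q)")
        case True
        then have "e \<in> diagonals (S - {p<..<q})" using diag_outer[of u w S p q] D e euw pqS by auto
        then show ?thesis using nc e by auto
      next
        case False
        then have "p \<le> u \<and> w \<le> q" using side[of u w] e euw by auto
        then show ?thesis using nocross_io[of p u w q x y] fi euw fxy by auto
      qed
    qed
    moreover have "f \<in> diagonals S" using f diag_mono[of "S - {p<..<q}" S] by auto
    ultimately show "f \<in> T \<inter> diagonals (S - {p<..<q})" using M f by auto
  qed auto
qed

definition bnd :: "nat \<Rightarrow> (nat \<times> nat) set" where
  "bnd n = {(i, Suc i) | i. Suc i < n} \<union> {(0, n - 1)}"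

lemma E_bounds:
  assumes "T \<subseteq> diagonals {0..<n}" "(x,y) \<in> T \<union> bnd n" "2 \<le> n"
  shows "x < y \<and> y < n"
  using assms by (auto simp: bnd_def diag_mem)

lemma E_noncross:
  assumes "noncrossing T" "T \<subseteq> diagonals {0..<n}" "e \<in> T \<union> bnd n" "f \<in> T \<union> bnd n" "2 \<le> n"
  shows "\<not> edge_cross e f"
proof -
  obtain x y where e: "e = (x,y)" by (cases e)
  obtain u w where f: "f = (u,w)" by (cases f)
  have b1: "x < y \<and> y < n" "u < w \<and> w < n" using E_bounds assms e f by blast+
  show ?thesis
  proof (cases "e \<in> T \<and> f \<in> T")
    case True then show ?thesis using assms(1) unfolding noncrossing_def by blast
  next
    case False
    then have "e \<in> bnd n \<or> f \<in> bnd n" using assms by auto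
    then show ?thesis using b1 e f by (auto simp: bnd_def cross_pair)
  qed
qed

lemma triangle:
  assumes T: "triangulation {0..<n} T" and n: "2 \<le> n" and ij: "(i,j) \<in> T \<union> bnd n" "i + 2 \<le> j"
  shows "\<exists>k. i<k \<and> k<j \<and> (i,k) \<in> T \<union> bnd n \<and> (k,j) \<in> T \<union> bnd n"
proof -
  have D: "T \<subseteq> diagonals {0..<n}" and N: "noncrossing T"
    and M: "\<forall>f\<in>diagonals {0..<n}. (\<forall>e\<in>T. \<not> edge_cross e f) \<longrightarrow> f \<in> T"
    using T unfolding triangulation_iff by auto
  have jn: "j < n" using E_bounds[OF D ij(1) n] by auto
  define K where "K = {k. i<k \<and> k<j \<and> (i,k) \<in> T \<union> bnd n}"
  have fin: "finite K" unfolding K_def by (rule finite_subset[of _ "{..<j}"]) auto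
  have "Suc i \<in> K" unfolding K_def using ij jn by (auto simp: bnd_def)
  then have ne: "K \<noteq> {}" by auto
  define k where "k = Max K"
  have kK: "k \<in> K" unfolding k_def using fin ne by simp
  have kmax: "k' \<le> k" if "k' \<in> K" for k' unfolding k_def using fin that by simp
  have k: "i < k" "k < j" "(i,k) \<in> T \<union> bnd n" using kK unfolding K_def by auto
  have "(k,j) \<in> T \<union> bnd n"
  proof (cases "Suc k = j")
    case True then show ?thesis using jn by (auto simp: bnd_def)
  next
    case False
    then have "Suc k < j" using k by auto
    have e1: "\<exists>m\<in>{0..<n}. k < m \<and> m < j" using \<open>Suc k < j\<close> jn by (intro bexI[of _ "Suc k"]) auto
    have e2: "\<exists>m\<in>{0..<n}. m < k \<or> j < m" using k jn by (intro bexI[of _ i]) auto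
    have dk: "(k,j) \<in> diagonals {0..<n}" using e1 e2 k jn by (simp add: diag_mem)
    have "\<not> edge_cross g (k,j)" if g: "g \<in> T" for g
    proof
      assume c: "edge_cross g (k,j)"
      obtain u w where guw: "g = (u,w)" by (cases g)
      have gE: "g \<in> T \<union> bnd n" using g by auto
      have nc1: "\<not> edge_cross g (i,j)" using E_noncross[OF N D gE ij(1) n] .
      have nc2: "\<not> edge_cross g (i,k)" using E_noncross[OF N D gE k(3) n] .
      have uw: "u < w" using D g guw by (auto simp: diag_mem)
      consider "u < k \<and> k < w \<and> w < j" | "k < u \<and> u < j \<and> j < w" using c guw by (auto simp: cross_pair)
      then show False
      proof cases
        case 1
        show False
        proof (cases "u < i")
          case True then show False using nc1 1 k guw by (auto simp: cross_pair)
        next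
          case False
          show False
          proof (cases "u = i")
            case True
            then have "w \<in> K" unfolding K_def using 1 k g guw by auto
            then show False using kmax 1 by fastforce
          next
            case False
            then show False using nc2 1 k guw \<open>\<not> u < i\<close> by (auto simp: cross_pair)
          qed
        qed
      next
        case 2
        then show False using nc1 k guw by (auto simp: cross_pair)
      qed
    qed
    then show ?thesis using M dk by auto
  qed
  then show ?thesis using k by blast
qed

lemma opp:
  assumes T: "triangulation {0..<n} T" and "0 < a" "a < b" "b < c" "c < n - 1"
  shows "\<exists>e\<in>T. (fst e < a \<and> b \<le> snd e \<and> snd e < c) \<or> (a \<le> fst e \<and> fst e < b \<and> c \<le> snd e)"
proof (rule ccontr)
  assume H: "\<not> ?thesis"
  have D: "T \<subseteq> diagonals {0..<n}" using T unfolding triangulation_iff by auto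
  have n: "2 \<le> n" using assms by auto
  have X: "\<forall>i j. (i,j) \<in> T \<union> bnd n \<and> i < a \<and> b \<le> j \<and> j - i = d \<longrightarrow> False" for d
  proof (induction d rule: less_induct)
    case (less d)
    show ?case
    proof (intro allI impI)
      fix i j assume ij: "(i,j) \<in> T \<union> bnd n \<and> i < a \<and> b \<le> j \<and> j - i = d"
      have jn: "i < j" "j < n" using E_bounds[OF D _ n, of i j] ij by auto
      show False
      proof (cases "j < c")
        case True
        then have "(i,j) \<notin> bnd n" using ij assms by (auto simp: bnd_def)
        then have "(i,j) \<in> T" using ij by auto
        then show False using H ij True by force
      next
        case False
        obtain k where k: "i<k" "k<j" "(i,k) \<in> T \<union> bnd n" "(k,j) \<in> T \<union> bnd n"
          using triangle[OF T n, of i j] ij assms False by auto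
        have kn: "k < n" using jn k by auto
        consider "k < a" | "a \<le> k \<and> k < b" | "b \<le> k \<and> k < c" | "c \<le> k" by linarith
        then show False
        proof cases
          case 1
          have "j - k < d" using k ij by auto
          then have "\<not> ((k,j) \<in> T \<union> bnd n \<and> k < a \<and> b \<le> j \<and> j - k = j - k)" using less.IH by blast
          then show False using k 1 ij by auto
        next
          case 2
          then have "(k,j) \<notin> bnd n" using False assms by (auto simp: bnd_def)
          then have "(k,j) \<in> T" using k by auto
          then show False using H 2 False by force
        next
          case 3
          then have "(i,k) \<notin> bnd n" using ij assms by (auto simp: bnd_def)
          then have "(i,k) \<in> T" using k by auto
          then show False using H 3 ij by force
        next
          case 4
          have "k - i < d" using k ij by auto
          then have "\<not> ((i,k) \<in> T \<union> bnd n \<and> i < a \<and> b \<le> k \<and> k - i = k - i)" using less.IH by blast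
          then show False using k 4 ij assms by auto
        qed
      qed
    qed
  qed
  have "(0, n-1) \<in> T \<union> bnd n" by (auto simp: bnd_def)
  moreover have "b \<le> n - 1" using assms by auto
  ultimately show False using assms X[of "n - 1 - 0", rule_format, of 0 "n - 1"] by auto
qed

lemma diag_intro:
  assumes "x \<in> S" "y \<in> S" "x < y" "k \<in> S" "x < k" "k < y" "k' \<in> S" "k' < x \<or> y < k'"
  shows "(x,y) \<in> diagonals S"
  using assms by (auto simp: diag_mem)

lemma glue':
  assumes "(p,q) \<in> diagonals S" "S \<inter> {p..q} = S1" "S - {p<..<q} = S2"
    "triangulation S1 T1" "triangulation S2 T2"
  shows "triangulation S (insert (p,q) (T1 \<union> T2))"
  using glue[of p q S T1 T2] assms by simp


locale polyset =
  fixes n a b c :: nat and BT BB :: "(nat \<times> nat) set"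
  assumes a3: "3 \<le> a" and ab: "a + 2 \<le> b" and bc: "b + 3 \<le> c" and cn: "c + 2 \<le> n"
    and sT: "saturated_blocker ({c..<n} \<union> {0, c - 1}) BT"
    and sB: "saturated_blocker ({a..<b} \<union> {a - 1, b}) BB"
begin

definition "BQ = {(r,l). r \<in> {0..<a} \<and> l \<in> {b..<c}} \<union> {(x,t). x \<in> {a..<b} \<and> t \<in> {c..<n}}"
definition "BM = (BQ - {(0,c-1),(a-1,b)}) \<union> BT \<union> BB"

lemma BT_diag: "BT \<subseteq> diagonals ({c..<n} \<union> {0, c - 1})"
  using sT unfolding saturated_blocker_def blocker_def by auto

lemma BB_diag: "BB \<subseteq> diagonals ({a..<b} \<union> {a - 1, b})"
  using sB unfolding saturated_blocker_def blocker_def by auto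

lemma HT:
  assumes "(x,y) \<in> BT"
  shows "x<y \<and> y<n \<and> c \<le> y \<and> ((x = 0 \<and> y < n-1) \<or> (c-1 \<le> x \<and> x+2 \<le> y))"
proof -
  have d: "(x,y) \<in> diagonals ({c..<n} \<union> {0, c - 1})" using assms BT_diag by auto
  then obtain k k' where k: "k \<in> {c..<n} \<union> {0, c - 1}" "x<k" "k<y"
    and k': "k' \<in> {c..<n} \<union> {0, c - 1}" "k'<x \<or> y<k'"
    and xy: "x \<in> {c..<n} \<union> {0, c - 1}" "y \<in> {c..<n} \<union> {0, c - 1}" "x < y"
    using d unfolding diag_mem by blast
  have m: "\<And>z. z \<in> {c..<n} \<union> {0, c - 1} \<longleftrightarrow> z = 0 \<or> z = c - 1 \<or> (c \<le> z \<and> z < n)" by auto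
  show ?thesis using k k' xy bc cn unfolding m by arith
qed

lemma HB:
  assumes "(x,y) \<in> BB"
  shows "a-1 \<le> x \<and> y \<le> b \<and> x+2 \<le> y \<and> (x,y) \<noteq> (a-1,b)"
proof -
  have d: "(x,y) \<in> diagonals ({a..<b} \<union> {a - 1, b})" using assms BB_diag by auto
  then obtain k k' where k: "k \<in> {a..<b} \<union> {a - 1, b}" "x<k" "k<y"
    and k': "k' \<in> {a..<b} \<union> {a - 1, b}" "k'<x \<or> y<k'"
    and xy: "x \<in> {a..<b} \<union> {a - 1, b}" "y \<in> {a..<b} \<union> {a - 1, b}" "x < y"
    using d unfolding diag_mem by blast
  have m: "\<And>z. z \<in> {a..<b} \<union> {a - 1, b} \<longleftrightarrow> a - 1 \<le> z \<and> z \<le> b" using a3 ab by auto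
  show ?thesis using k k' xy a3 ab unfolding m by auto
qed

lemma inBM:
  assumes "(x,y) \<in> BM"
  shows "(x<a \<and> b \<le> y \<and> y < c \<and> (x,y) \<noteq> (0,c-1) \<and> (x,y) \<noteq> (a-1,b)) \<or> (a \<le> x \<and> x<b \<and> c \<le> y \<and> y<n)
     \<or> (x,y) \<in> BT \<or> (x,y) \<in> BB"
  using assms unfolding BM_def BQ_def by auto

lemma notBM:
  assumes "\<not>(x<a \<and> b \<le> y \<and> y < c \<and> (x,y) \<noteq> (0,c-1) \<and> (x,y) \<noteq> (a-1,b))"
    "\<not>(a \<le> x \<and> x<b \<and> c \<le> y \<and> y<n)"
    "\<not>(x<y \<and> y<n \<and> c \<le> y \<and> ((x = 0 \<and> y < n-1) \<or> (c-1 \<le> x \<and> x+2 \<le> y)))"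
    "\<not>(a-1 \<le> x \<and> y \<le> b \<and> x+2 \<le> y \<and> (x,y) \<noteq> (a-1,b))"
  shows "(x,y) \<notin> BM"
proof
  assume "(x,y) \<in> BM"
  from inBM[OF this] consider
    "(x<a \<and> b \<le> y \<and> y < c \<and> (x,y) \<noteq> (0,c-1) \<and> (x,y) \<noteq> (a-1,b))" |
    "(a \<le> x \<and> x<b \<and> c \<le> y \<and> y<n)" | "(x,y) \<in> BT" | "(x,y) \<in> BB" by blast
  then show False
  proof cases
    case 3 show False using HT[OF 3] assms(3) by blast
  next
    case 4 show False using HB[OF 4] assms(4) by blast
  qed (use assms in blast)+
qed

lemma fan_avoid:
  assumes "\<And>x y. x \<in> S \<Longrightarrow> y \<in> S \<Longrightarrow> x<y \<Longrightarrow> x = v \<or> y = v \<Longrightarrow> (x,y) \<notin> BM"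
  shows "\<forall>f\<in>fan S v. f \<notin> BM"
  using assms fan_mem by fast


lemma inner_RL:
  assumes "r < a" "b \<le> l" "l < c" "(r,l) \<noteq> (a-1,b)"
  shows "\<exists>T. triangulation {r..l} T \<and> (\<forall>f\<in>T. f \<notin> BM)"
proof (cases "r + 2 \<le> a")
  case True
  let ?T = "insert (a-2,b-1) (fan {a-2..b-1} (a-2) \<union> fan ({r..a-2} \<union> {b-1..l}) (b-1))"
  have "triangulation {r..l} ?T"
  proof (rule glue')
    show "(a-2,b-1) \<in> diagonals {r..l}" using True assms a3 ab by (intro diag_intro[where k="a-1" and k'=l]) auto
    show "{r..l} \<inter> {a-2..b-1} = {a-2..b-1}" using True assms ab by auto
    show "{r..l} - {a-2<..<b-1} = {r..a-2} \<union> {b-1..l}" using True assms ab by auto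
  qed (use True assms ab in \<open>auto intro!: fan_tri\<close>)
  moreover have "\<forall>f\<in>?T. f \<notin> BM"
  proof -
    have "(a-2,b-1) \<notin> BM" by (rule notBM) (use a3 ab bc in auto)
    moreover have "\<forall>f\<in>fan {a-2..b-1} (a-2). f \<notin> BM"
      by (rule fan_avoid, rule notBM) (use a3 ab bc in auto)
    moreover have "\<forall>f\<in>fan ({r..a-2} \<union> {b-1..l}) (b-1). f \<notin> BM"
      by (rule fan_avoid, rule notBM) (use a3 ab bc assms True in auto)
    ultimately show ?thesis by blast
  qed
  ultimately show ?thesis by blast
next
  case False
  then have r: "r = a - 1" and l: "b + 1 \<le> l" using assms by auto
  let ?T = "insert (a,b+1) (fan {a..b+1} (b+1) \<union> fan ({a-1..a} \<union> {b+1..l}) a)"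
  have "triangulation {r..l} ?T"
  proof (rule glue')
    show "(a,b+1) \<in> diagonals {r..l}" using r l assms a3 ab by (intro diag_intro[where k="a+1" and k'="a-1"]) auto
    show "{r..l} \<inter> {a..b+1} = {a..b+1}" using r l assms ab by auto
    show "{r..l} - {a<..<b+1} = {a-1..a} \<union> {b+1..l}" using r l assms ab by auto
  qed (use r l assms ab in \<open>auto intro!: fan_tri\<close>)
  moreover have "\<forall>f\<in>?T. f \<notin> BM"
  proof -
    have "(a,b+1) \<notin> BM" by (rule notBM) (use a3 ab bc in auto)
    moreover have "\<forall>f\<in>fan {a..b+1} (b+1). f \<notin> BM"
      by (rule fan_avoid, rule notBM) (use a3 ab bc in auto)
    moreover have "\<forall>f\<in>fan ({a-1..a} \<union> {b+1..l}) a. f \<notin> BM"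
      by (rule fan_avoid, rule notBM) (use a3 ab bc assms l in auto)
    ultimately show ?thesis by blast
  qed
  ultimately show ?thesis using r by blast
qed

lemma outer_RL:
  assumes "r < a" "b \<le> l" "l < c" "(r,l) \<noteq> (0,c-1)"
  shows "\<exists>T. triangulation ({0..r} \<union> {l..<n}) T \<and> (\<forall>f\<in>T. f \<notin> BM)"
proof (cases "1 \<le> r")
  case True
  let ?T = "insert (1,c) (fan ({1..r} \<union> {l..c}) c \<union> fan ({0..1} \<union> {c..<n}) 1)"
  have "triangulation ({0..r} \<union> {l..<n}) ?T"
  proof (rule glue')
    show "(1,c) \<in> diagonals ({0..r} \<union> {l..<n})" using True assms a3 ab bc cn by (intro diag_intro[where k="l" and k'=0]) auto
    show "({0..r} \<union> {l..<n}) \<inter> {1..c} = {1..r} \<union> {l..c}" using True assms ab bc cn by auto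
    show "({0..r} \<union> {l..<n}) - {1<..<c} = {0..1} \<union> {c..<n}" using True assms a3 ab bc cn by auto
  qed (use True assms ab bc cn in \<open>auto intro!: fan_tri\<close>)
  moreover have "\<forall>f\<in>?T. f \<notin> BM"
  proof -
    have "(1,c) \<notin> BM" by (rule notBM) (use a3 ab bc in auto)
    moreover have "\<forall>f\<in>fan ({1..r} \<union> {l..c}) c. f \<notin> BM"
      by (rule fan_avoid, rule notBM) (use a3 ab bc assms in auto)
    moreover have "\<forall>f\<in>fan ({0..1} \<union> {c..<n}) 1. f \<notin> BM"
      by (rule fan_avoid, rule notBM) (use a3 ab bc cn in auto)
    ultimately show ?thesis by blast
  qed
  ultimately show ?thesis by blast
next
  case False
  then have r: "r = 0" and l: "l + 2 \<le> c" using assms by auto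
  let ?T = "insert (c-2,n-1) (fan {c-2..<n} (c-2) \<union> fan ({0} \<union> {l..c-2} \<union> {n-1}) (n-1))"
  have "triangulation ({0..r} \<union> {l..<n}) ?T"
  proof (rule glue')
    show "(c-2,n-1) \<in> diagonals ({0..r} \<union> {l..<n})" using r l assms a3 ab bc cn by (intro diag_intro[where k="c-1" and k'=0]) auto
    show "({0..r} \<union> {l..<n}) \<inter> {c-2..n-1} = {c-2..<n}" using r l assms ab bc cn by auto
    show "({0..r} \<union> {l..<n}) - {c-2<..<n-1} = {0} \<union> {l..c-2} \<union> {n-1}" using r l assms a3 ab bc cn by auto
  qed (use r l assms ab bc cn in \<open>auto intro!: fan_tri\<close>)
  moreover have "\<forall>f\<in>?T. f \<notin> BM"
  proof -
    have "(c-2,n-1) \<notin> BM" by (rule notBM) (use a3 ab bc cn in auto)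
    moreover have "\<forall>f\<in>fan {c-2..<n} (c-2). f \<notin> BM"
      by (rule fan_avoid, rule notBM) (use a3 ab bc cn in auto)
    moreover have "\<forall>f\<in>fan ({0} \<union> {l..c-2} \<union> {n-1}) (n-1). f \<notin> BM"
      by (rule fan_avoid, rule notBM) (use a3 ab bc cn assms l in auto)
    ultimately show ?thesis by blast
  qed
  ultimately show ?thesis by blast
qed


end


context polyset begin

lemma case_BQ2:
  assumes "a \<le> x0" "x0 < b" "c \<le> t0" "t0 < n"
  shows "\<exists>T. triangulation {0..<n} T \<and> (\<forall>f\<in>T. f \<in> BM \<longrightarrow> f = (x0,t0))"
proof -
  let ?T = "insert (x0,t0) (fan {x0..t0} (b+1) \<union> fan ({0..x0} \<union> {t0..<n}) 1)"
  have "triangulation {0..<n} ?T"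
  proof (rule glue')
    show "(x0,t0) \<in> diagonals {0..<n}" using assms a3 ab bc cn by (intro diag_intro[where k="b" and k'=0]) auto
    show "{0..<n} \<inter> {x0..t0} = {x0..t0}" using assms by auto
    show "{0..<n} - {x0<..<t0} = {0..x0} \<union> {t0..<n}" using assms ab bc by auto
  qed (use assms a3 ab bc cn in \<open>auto intro!: fan_tri\<close>)
  moreover have "\<forall>f\<in>fan {x0..t0} (b+1). f \<notin> BM"
    by (rule fan_avoid, rule notBM) (use a3 ab bc cn assms in auto)
  moreover have "\<forall>f\<in>fan ({0..x0} \<union> {t0..<n}) 1. f \<notin> BM"
    by (rule fan_avoid, rule notBM) (use a3 ab bc cn assms in auto)
  ultimately show ?thesis by blast
qed

lemma case_RL:
  assumes "r < a" "b \<le> l" "l < c" "(r,l) \<noteq> (0,c-1)" "(r,l) \<noteq> (a-1,b)"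
  shows "\<exists>T. triangulation {0..<n} T \<and> (\<forall>f\<in>T. f \<in> BM \<longrightarrow> f = (r,l))"
proof -
  obtain T1 where T1: "triangulation {r..l} T1" "\<forall>f\<in>T1. f \<notin> BM" using inner_RL assms by blast
  obtain T2 where T2: "triangulation ({0..r} \<union> {l..<n}) T2" "\<forall>f\<in>T2. f \<notin> BM" using outer_RL assms by blast
  have "triangulation {0..<n} (insert (r,l) (T1 \<union> T2))"
  proof (rule glue'[OF _ _ _ T1(1) T2(1)])
    show "(r,l) \<in> diagonals {0..<n}" using assms a3 ab bc cn by (intro diag_intro[where k="a" and k'="n-1"]) auto
    show "{0..<n} \<inter> {r..l} = {r..l}" using assms bc cn by auto
    show "{0..<n} - {r<..<l} = {0..r} \<union> {l..<n}" using assms ab bc cn by auto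
  qed
  then show ?thesis using T1 T2 by blast
qed

lemma case_T:
  assumes e: "e \<in> BT"
  shows "\<exists>T. triangulation {0..<n} T \<and> (\<forall>f\<in>T. f \<in> BM \<longrightarrow> f = e)"
proof -
  have "\<not> blocker ({c..<n} \<union> {0, c - 1}) (BT - {e})" using sT e unfolding saturated_blocker_def by blast
  moreover have "BT - {e} \<subseteq> diagonals ({c..<n} \<union> {0, c - 1})" using BT_diag by auto
  ultimately obtain T' where T': "triangulation ({c..<n} \<union> {0, c - 1}) T'" "(BT - {e}) \<inter> T' = {}"
    unfolding blocker_def by blast
  have h1: "0 < a" "b \<le> c-1" "c-1 < c" "(0, c-1) \<noteq> (a-1,b)" using a3 ab bc by auto
  obtain T1 where T1: "triangulation {0..c-1} T1" "\<forall>f\<in>T1. f \<notin> BM"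
    using inner_RL[OF h1] by blast
  have "triangulation {0..<n} (insert (0,c-1) (T1 \<union> T'))"
  proof (rule glue'[OF _ _ _ T1(1) T'(1)])
    show "(0,c-1) \<in> diagonals {0..<n}" using a3 ab bc cn by (intro diag_intro[where k="1" and k'="n-1"]) auto
    show "{0..<n} \<inter> {0..c-1} = {0..c-1}" using bc cn by auto
    show "{0..<n} - {0<..<c-1} = {c..<n} \<union> {0, c - 1}" using bc cn by auto
  qed
  moreover have "f = e" if f: "f \<in> insert (0,c-1) (T1 \<union> T')" "f \<in> BM" for f
  proof -
    have "(0,c-1) \<notin> BM" by (rule notBM) (use a3 ab bc cn in auto)
    then have "f \<in> T'" using f T1 by auto
    then have fd: "f \<in> diagonals ({c..<n} \<union> {0, c - 1})" using T' unfolding triangulation_def by auto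
    obtain x y where fxy: "f = (x,y)" by (cases f)
    have m: "x = 0 \<or> x = c - 1 \<or> (c \<le> x \<and> x < n)" "y = 0 \<or> y = c - 1 \<or> (c \<le> y \<and> y < n)" "x < y"
      using fd fxy by (auto simp: diag_mem)
    have "f \<notin> BB" using HB[of x y] m fxy a3 ab bc by auto
    moreover have "f \<in> BT \<Longrightarrow> f = e" using T' \<open>f \<in> T'\<close> by auto
    moreover have "\<not>(x<a \<and> b \<le> y \<and> y < c \<and> (x,y) \<noteq> (0,c-1) \<and> (x,y) \<noteq> (a-1,b))" using m a3 ab bc by auto
    moreover have "\<not>(a \<le> x \<and> x<b \<and> c \<le> y \<and> y<n)" using m a3 ab bc by auto
    ultimately show "f = e" using inBM[of x y] f(2) fxy by blast
  qed
  ultimately show ?thesis by blast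
qed

lemma case_B:
  assumes e: "e \<in> BB"
  shows "\<exists>T. triangulation {0..<n} T \<and> (\<forall>f\<in>T. f \<in> BM \<longrightarrow> f = e)"
proof -
  have "\<not> blocker ({a..<b} \<union> {a - 1, b}) (BB - {e})" using sB e unfolding saturated_blocker_def by blast
  moreover have "BB - {e} \<subseteq> diagonals ({a..<b} \<union> {a - 1, b})" using BB_diag by auto
  ultimately obtain T' where T': "triangulation ({a..<b} \<union> {a - 1, b}) T'" "(BB - {e}) \<inter> T' = {}"
    unfolding blocker_def by blast
  obtain T2 where T2: "triangulation ({0..a-1} \<union> {b..<n}) T2" "\<forall>f\<in>T2. f \<notin> BM"
    using outer_RL[of "a-1" b] a3 ab bc by auto
  have "triangulation {0..<n} (insert (a-1,b) (T' \<union> T2))"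
  proof (rule glue'[OF _ _ _ T'(1) T2(1)])
    show "(a-1,b) \<in> diagonals {0..<n}" using a3 ab bc cn by (intro diag_intro[where k="a" and k'="0"]) auto
    show "{0..<n} \<inter> {a-1..b} = {a..<b} \<union> {a - 1, b}" using a3 ab bc cn by auto
    show "{0..<n} - {a-1<..<b} = {0..a-1} \<union> {b..<n}" using a3 ab bc cn by auto
  qed
  moreover have "f = e" if f: "f \<in> insert (a-1,b) (T' \<union> T2)" "f \<in> BM" for f
  proof -
    have "(a-1,b) \<notin> BM" by (rule notBM) (use a3 ab bc cn in auto)
    then have "f \<in> T'" using f T2 by auto
    then have fd: "f \<in> diagonals ({a..<b} \<union> {a - 1, b})" using T' unfolding triangulation_def by auto
    obtain x y where fxy: "f = (x,y)" by (cases f)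
    have m: "a - 1 \<le> x" "y \<le> b" "x < y"
      using fd fxy a3 ab by (auto simp: diag_mem)
    have "f \<notin> BT" using HT[of x y] m fxy a3 ab bc by auto
    moreover have "f \<in> BB \<Longrightarrow> f = e" using T' \<open>f \<in> T'\<close> by auto
    moreover have "\<not>(x<a \<and> b \<le> y \<and> y < c \<and> (x,y) \<noteq> (0,c-1) \<and> (x,y) \<noteq> (a-1,b))" using m a3 ab bc by auto
    moreover have "\<not>(a \<le> x \<and> x<b \<and> c \<le> y \<and> y<n)" using m a3 ab bc by auto
    ultimately show "f = e" using inBM[of x y] f(2) fxy by blast
  qed
  ultimately show ?thesis by blast
qed

lemma BM_diag: "BM \<subseteq> diagonals {0..<n}"
proof
  fix f assume f: "f \<in> BM"
  obtain x y where fxy: "f = (x,y)" by (cases f)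
  have ST: "{c..<n} \<union> {0, c - 1} \<subseteq> {0..<n}" using bc cn by auto
  have SB: "{a..<b} \<union> {a - 1, b} \<subseteq> {0..<n}" using ab bc cn by auto
  show "f \<in> diagonals {0..<n}"
  proof (cases "f \<in> BT \<or> f \<in> BB")
    case True
    then show ?thesis using BT_diag BB_diag diag_mono[OF ST] diag_mono[OF SB] by blast
  next
    case False
    then have "f \<in> BQ" using f unfolding BM_def by auto
    then consider "x < a" "b \<le> y" "y < c" | "a \<le> x" "x < b" "c \<le> y" "y < n" unfolding BQ_def fxy by auto
    then show ?thesis
    proof cases
      case 1 then show ?thesis unfolding fxy using a3 ab bc cn by (intro diag_intro[where k="a" and k'="n-1"]) auto
    next
      case 2 then show ?thesis unfolding fxy using a3 ab bc cn by (intro diag_intro[where k="b" and k'="0"]) auto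
    qed
  qed
qed

lemma blocker_BM: "blocker {0..<n} BM"
  unfolding blocker_def
proof (intro conjI allI impI)
  show "BM \<subseteq> diagonals {0..<n}" by (rule BM_diag)
  fix T assume T: "triangulation {0..<n} T"
  have "0 < a" "a < b" "b < c" "c < n - 1" using a3 ab bc cn by auto
  from opp[OF T this] obtain e where e: "e \<in> T"
    "(fst e < a \<and> b \<le> snd e \<and> snd e < c) \<or> (a \<le> fst e \<and> fst e < b \<and> c \<le> snd e)" by blast
  have D: "T \<subseteq> diagonals {0..<n}" using T unfolding triangulation_def by auto
  show "BM \<inter> T \<noteq> {}"
  proof (cases "e = (0,c-1)")
    case True
    have "triangulation ({0..<n} - {0<..<c-1}) (T \<inter> diagonals ({0..<n} - {0<..<c-1}))"
      using restrict(2)[OF T] e(1) True by blast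
    moreover have "{0..<n} - {0<..<c-1} = {c..<n} \<union> {0, c - 1}" using bc cn by auto
    ultimately have "BT \<inter> (T \<inter> diagonals ({c..<n} \<union> {0, c - 1})) \<noteq> {}"
      using sT unfolding saturated_blocker_def blocker_def by auto
    then show ?thesis unfolding BM_def by blast
  next
    case F1: False
    show ?thesis
    proof (cases "e = (a-1,b)")
      case True
      have "triangulation ({0..<n} \<inter> {a-1..b}) (T \<inter> diagonals ({0..<n} \<inter> {a-1..b}))"
        using restrict(1)[OF T] e(1) True by blast
      moreover have "{0..<n} \<inter> {a-1..b} = {a..<b} \<union> {a - 1, b}" using a3 ab bc cn by auto
      ultimately have "BB \<inter> (T \<inter> diagonals ({a..<b} \<union> {a - 1, b})) \<noteq> {}"
        using sB unfolding saturated_blocker_def blocker_def by auto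
      then show ?thesis unfolding BM_def by blast
    next
      case False
      have "snd e < n" using D e(1) by (auto simp: diagonals_def)
      then have "e \<in> BQ" using e(2) unfolding BQ_def by (cases e) auto
      then have "e \<in> BM" using F1 False unfolding BM_def by blast
      then show ?thesis using e(1) by blast
    qed
  qed
qed

lemma sat_BM: "saturated_blocker {0..<n} BM"
  unfolding saturated_blocker_def
proof (intro conjI ballI)
  show "blocker {0..<n} BM" by (rule blocker_BM)
  fix e assume e: "e \<in> BM"
  have "\<exists>T. triangulation {0..<n} T \<and> (\<forall>f\<in>T. f \<in> BM \<longrightarrow> f = e)"
  proof (cases "e \<in> BT \<or> e \<in> BB")
    case True then show ?thesis using case_T case_B by blast
  next
    case False
    obtain x y where exy: "e = (x,y)" by (cases e)
    have "e \<in> BQ" "e \<noteq> (0,c-1)" "e \<noteq> (a-1,b)" using e False unfolding BM_def by auto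
    then consider "x < a" "b \<le> y" "y < c" | "a \<le> x" "x < b" "c \<le> y" "y < n" unfolding BQ_def exy by auto
    then show ?thesis
    proof cases
      case 1 then show ?thesis using case_RL[of x y] \<open>e \<noteq> (0,c-1)\<close> \<open>e \<noteq> (a-1,b)\<close> exy by blast
    next
      case 2 then show ?thesis using case_BQ2[of x y] exy by blast
    qed
  qed
  then obtain T where T: "triangulation {0..<n} T" "\<forall>f\<in>T. f \<in> BM \<longrightarrow> f = e" by blast
  then have "(BM - {e}) \<inter> T = {}" by blast
  then show "\<not> blocker {0..<n} (BM - {e})" using T(1) unfolding blocker_def by blast
qed

lemma finite_diag: "finite S \<Longrightarrow> finite (diagonals S)"
  by (rule finite_subset[of _ "S \<times> S"]) (auto simp: diagonals_def)

lemma card_BM: "card BM = (n - c) * (b - a) + (c - b) * a + card BT + card BB - 2"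
proof -
  have fT: "finite BT" using BT_diag finite_diag[of "{c..<n} \<union> {0, c - 1}"] finite_subset by auto
  have fB: "finite BB" using BB_diag finite_diag[of "{a..<b} \<union> {a - 1, b}"] finite_subset by auto
  have BQe: "BQ = ({0..<a} \<times> {b..<c}) \<union> ({a..<b} \<times> {c..<n})" unfolding BQ_def by auto
  have cBQ: "card BQ = a * (c - b) + (b - a) * (n - c)"
    unfolding BQe by (subst card_Un_disjoint) (auto simp: card_cartesian_product)
  have fQ: "finite BQ" unfolding BQe by auto
  have sub: "{(0,c-1),(a-1,b)} \<subseteq> BQ" unfolding BQ_def using a3 ab bc by auto
  have c2: "card {(0::nat,c-1),(a-1,b)} = 2" using a3 by auto
  have cQ: "card (BQ - {(0,c-1),(a-1,b)}) = card BQ - 2"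
    using card_Diff_subset[OF _ sub] c2 by auto
  have d1: "(BQ - {(0,c-1),(a-1,b)}) \<inter> BT = {}"
  proof -
    have "f \<notin> BT" if "f \<in> BQ - {(0,c-1),(a-1,b)}" for f
      using that HT[of "fst f" "snd f"] a3 ab bc unfolding BQ_def by auto
    then show ?thesis by blast
  qed
  have d2: "((BQ - {(0,c-1),(a-1,b)}) \<union> BT) \<inter> BB = {}"
  proof -
    have "f \<notin> BB" if "f \<in> (BQ - {(0,c-1),(a-1,b)}) \<union> BT" for f
      using that HT[of "fst f" "snd f"] HB[of "fst f" "snd f"] a3 ab bc unfolding BQ_def by auto
    then show ?thesis by blast
  qed
  have "card BM = card (BQ - {(0,c-1),(a-1,b)}) + card BT + card BB"
    unfolding BM_def using d1 d2 fT fB fQ by (simp add: card_Un_disjoint)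
  moreover have "card BQ \<ge> 2" using cBQ a3 ab bc cn
    by (metis add_leD1 c2 card_mono fQ sub)
  ultimately show ?thesis using cBQ cQ by (simp add: mult.commute add.commute)
qed

end


theorem proposition3p2:
  fixes n a b c :: nat and B_T B_B :: "(nat \<times> nat) set"
  assumes "0 < a" "a < b" "b < c" "c < n - 1"
    and "card {b..<c} \<ge> 3" "card {0..<a} \<ge> 3" "card {c..<n} \<ge> 2" "card {a..<b} \<ge> 2"
    and "saturated_blocker ({c..<n} \<union> {0, c - 1}) B_T"
    and "saturated_blocker ({a..<b} \<union> {a - 1, b}) B_B"
  shows "let B_Q = {(r, l). r \<in> {0..<a} \<and> l \<in> {b..<c}} \<union> {(x, t). x \<in> {a..<b} \<and> t \<in> {c..<n}};
             B_M = (B_Q - {(0, c - 1), (a - 1, b)}) \<union> B_T \<union> B_B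
         in saturated_blocker {0..<n} B_M \<and>
            card B_M = card {c..<n} * card {a..<b} + card {b..<c} * card {0..<a} + card B_T + card B_B - 2"
proof -
  have h: "3 \<le> a" "a + 2 \<le> b" "b + 3 \<le> c" "c + 2 \<le> n" using assms(5-8) by auto
  interpret P: polyset n a b c B_T B_B
    by (unfold_locales) (use h assms(9,10) in auto)
  have e: "P.BM = ({(r, l). r \<in> {0..<a} \<and> l \<in> {b..<c}} \<union> {(x, t). x \<in> {a..<b} \<and> t \<in> {c..<n}}
      - {(0, c - 1), (a - 1, b)}) \<union> B_T \<union> B_B"
    unfolding P.BM_def P.BQ_def by simp
  show ?thesis
    unfolding Let_def e[symmetric] using P.sat_BM P.card_BM by simp
qed

end
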